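(* Let $\mu>0$ and let $\mathcal{D}_\mu$ be the collection of all mixed Poisson random variables $D$ with $\mathbb{E}(D)=\mu$. Let $\mu_c$ be the largest real root of $2x=e^{x-1/2}$ ($\mu_c\approx 1.756$). Let $X^*$ be the random variable with $$\mathbb{P}(X^*=\max(\mu,\mu_c))=1-\mathbb{P}(X^*=0)=\min(1,\mu/\mu_c),$$ and let $D^*$ be mixed Poisson$(X^* )$. Then $$\min_{D\in\mathcal{D}_\mu} q_D=q_{D^*}.$$
   Context: For a non-negative real random variable $X$, a random variable $D$ is mixed Poisson$(X)$ if $\mathbb{P}(D=k)=\mathbb{E}\big(\tfrac{X^k}{k!}e^{-X}\big)$ for $k\in\{0,1,2,\dots\}$; then $\mathbb{E}(D)=\mathbb{E}(X)=:\mu_X$. For an $\{0,1,2,\dots\}$-valued random variable $D$ with $0<\mu_D=\mathbb{E}(D)<\infty$, its generating function is $f_D(s)=\mathbb{E}(s^D)$, $s\in[0,1]$, and $\bar f_D(s)=f_D'(s)/\mu_D=\sum_{k\ge1}\frac{k\mathbb{P}(D=k)}{\mu_D}s^{k-1}$ (the generating function of $\bar D-1$, where $\bar D$ is the size-biased version of $D$). For $D$ mixed Poisson$(X)$ one has $f_D(s)=\mathbb{E}(e^{-(1-s)X})$ and $\bar f_D(s)=\mathbb{E}(Xe^{-(1-s)X})/\mu_X$. $z_D$ denotes the smallest root in $[0,1]$ of $s=\bar f_D(s)$, and $q_D:=f_D(z_D)$. (In the Poissonian random graph with i.i.d. vertex weights distributed as $X$, $1-q_D$ is the limiting fraction of vertices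 in the largest component.) *)

theory Defs
  imports "HOL-Probability.Probability"
begin

definition nonneg_rv_mean :: "'a measure \<Rightarrow> ('a \<Rightarrow> real) \<Rightarrow> real \<Rightarrow> bool" where
  "nonneg_rv_mean M X mu \<longleftrightarrow> prob_space M \<and> X \<in> borel_measurable M \<and>
     (AE w in M. 0 \<le> X w) \<and> integrable M X \<and> (\<integral>w. X w \<partial>M) = mu"

definition mixed_poisson_pmf :: "'a measure \<Rightarrow> ('a \<Rightarrow> real) \<Rightarrow> nat \<Rightarrow> real" where
  "mixed_poisson_pmf M X k = (\<integral>w. X w ^ k / fact k * exp (- X w) \<partial>M)"

text \<open>For a law p of a {0,1,2,...}-valued variable D (p k = P(D = k)):\<close>
definition gen_fun :: "(nat \<Rightarrow> real) \<Rightarrow> real \<Rightarrow> real" where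
  "gen_fun p s = (\<Sum>k. p k * s ^ k)"

definition mean_nat :: "(nat \<Rightarrow> real) \<Rightarrow> real" where
  "mean_nat p = (\<Sum>k. real k * p k)"

text \<open>bar f_D(s) = f_D'(s)/mu_D = sum_{k>=1} k P(D=k)/mu_D s^(k-1).\<close>
definition sb_gen_fun :: "(nat \<Rightarrow> real) \<Rightarrow> real \<Rightarrow> real" where
  "sb_gen_fun p s = (\<Sum>k. real (Suc k) * p (Suc k) / mean_nat p * s ^ k)"

definition z_root :: "(nat \<Rightarrow> real) \<Rightarrow> real" where
  "z_root p = (LEAST s. s \<in> {0..1} \<and> s = sb_gen_fun p s)"

definition q_val :: "(nat \<Rightarrow> real) \<Rightarrow> real" where
  "q_val p = gen_fun p (z_root p)"

definition mu_c :: real where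
  "mu_c = (GREATEST x::real. 2 * x = exp (x - 1/2))"

end

theory Submission
  imports Defs
begin

lemma tangent_ineq:
  fixes w y :: real
  assumes w1: "1 \<le> w" and ew: "1 + 2*w \<le> exp w" and y0: "0 \<le> y"
  shows "(1 - exp (-y)) * (w + y) \<le> (1 + exp (-w) * (2*w - 1)) * y + (w - w * exp (-w) - 2*w^2 * exp (-w))"
proof -
  define K where "K = 1 + exp (-w) * (2*w - 1)"
  define Mc where "Mc = w - w * exp (-w) - 2*w^2 * exp (-w)"
  define u where "u = (\<lambda>y. K * y + Mc - (1 - exp (-y)) * (w + y))"
  define u1 where "u1 = (\<lambda>y. K - 1 - exp (-y) * (w + y - 1))"
  define u2 where "u2 = (\<lambda>y::real. exp (-y) * (w + y - 2))"
  have du: "(u has_real_derivative u1 x) (at x)" for x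
    unfolding u_def u1_def
    by (auto intro!: derivative_eq_intros simp: algebra_simps)
  have du1: "(u1 has_real_derivative u2 x) (at x)" for x
    unfolding u1_def u2_def
    by (auto intro!: derivative_eq_intros simp: algebra_simps)
  have uw: "u w = 0"
    unfolding u_def K_def Mc_def by (simp add: algebra_simps power2_eq_square)
  have u1w: "u1 w = 0"
    unfolding u1_def K_def by (simp add: algebra_simps)
  have em: "exp (-w) * exp w = 1" by (simp add: exp_minus field_simps)
  have u0: "u 0 \<ge> 0"
  proof -
    have "u 0 = Mc" unfolding u_def by simp
    also have "Mc = w * exp (-w) * (exp w - 1 - 2*w)"
      unfolding Mc_def using em by (simp add: algebra_simps power2_eq_square)
    also have "\<dots> \<ge> 0" using ew w1 by (intro mult_nonneg_nonneg) auto
    finally show ?thesis .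
  qed
  have u2pos: "u2 x \<ge> 0" if "2 - w \<le> x" for x
    unfolding u2_def using that by simp
  have u2neg: "u2 x \<le> 0" if "x \<le> 2 - w" for x
    unfolding u2_def using that by (simp add: mult_nonneg_nonpos)
  define c where "c = max 0 (2 - w)"
  have cw: "c \<le> w" "0 \<le> c" using w1 unfolding c_def by auto
  have ugoal: "u y \<ge> 0"
  proof (cases "w \<le> y")
    case True
    have "u w \<le> u y"
    proof (rule DERIV_nonneg_imp_nondecreasing[of w y u, OF True])
      fix x assume x: "w \<le> x" "x \<le> y"
      have "u1 w \<le> u1 x"
        by (rule DERIV_nonneg_imp_nondecreasing[of w x u1, OF x(1)])
           (use du1 u2pos w1 in \<open>fastforce\<close>)
      then show "\<exists>d. DERIV u x :> d \<and> d \<ge> 0" using du u1w by auto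
    qed
    then show ?thesis using uw by simp
  next
    case False
    show ?thesis
    proof (cases "c \<le> y")
      case True
      have "u w \<le> u y"
      proof -
        have "u y \<ge> u w"
        proof (rule DERIV_nonpos_imp_nonincreasing[of y w u])
          show "y \<le> w" using False by simp
          fix x assume x: "y \<le> x" "x \<le> w"
          have "u1 x \<le> u1 w"
            by (rule DERIV_nonneg_imp_nondecreasing[of x w u1, OF x(2)])
               (use du1 u2pos True x c_def in \<open>fastforce\<close>)
          then show "\<exists>d. DERIV u x :> d \<and> d \<le> 0" using du u1w by auto
        qed
        then show ?thesis .
      qed
      then show ?thesis using uw by simp
    next
      case False
      have yc: "y < c" "0 < c" using False y0 by auto
      have c2: "c = 2 - w" using yc unfolding c_def by auto
      have cvx: "convex_on {0..c} (\<lambda>x. - u x)"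
      proof (rule convex_on_realI[where f'="\<lambda>x. - u1 x"])
        show "connected {0..c}" by simp
        fix x assume "x \<in> {0..c}"
        show "((\<lambda>x. - u x) has_real_derivative - u1 x) (at x)"
          using du by (auto intro!: derivative_eq_intros)
      next
        fix x z assume xz: "x \<in> {0..c}" "z \<in> {0..c}" "x \<le> z"
        have "u1 z \<le> u1 x"
          by (rule DERIV_nonpos_imp_nonincreasing[of x z u1, OF xz(3)])
             (use du1 u2neg xz c2 in \<open>fastforce\<close>)
        then show "- u1 x \<le> - u1 z" by simp
      qed
      have uc: "u c \<ge> 0"
      proof -
        have "u c \<ge> u w"
        proof (rule DERIV_nonpos_imp_nonincreasing[of c w u])
          show "c \<le> w" using cw by simp
          fix x assume x: "c \<le> x" "x \<le> w"
          have "u1 x \<le> u1 w"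
            by (rule DERIV_nonneg_imp_nondecreasing[of x w u1, OF x(2)])
               (use du1 u2pos x c_def in \<open>fastforce\<close>)
          then show "\<exists>d. DERIV u x :> d \<and> d \<le> 0" using du u1w by auto
        qed
        then show ?thesis using uw by simp
      qed
      define th where "th = y / c"
      have th: "0 \<le> th" "th \<le> 1" "y = (1 - th) * 0 + th * c"
        using yc y0 unfolding th_def by auto
      have "- u y \<le> (1 - th) * (- u 0) + th * (- u c)"
        using convex_onD[OF cvx, of th 0 c] th cw by auto
      moreover have "(1 - th) * u 0 + th * u c \<ge> 0"
        using th u0 uc by (intro add_nonneg_nonneg mult_nonneg_nonneg) auto
      ultimately show ?thesis by (simp add: algebra_simps)
    qed
  qed
  then show ?thesis unfolding u_def K_def Mc_def by simp
qed


lemma sums_integral_dom: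
  fixes f :: "nat \<Rightarrow> 'a \<Rightarrow> real"
  assumes int: "\<And>i. integrable M (f i)" and Fm: "F \<in> borel_measurable M" and W: "integrable M W"
    and su: "AE x in M. (\<lambda>i. f i x) sums F x"
    and bd: "\<And>n. AE x in M. \<bar>\<Sum>i<n. f i x\<bar> \<le> W x"
  shows "(\<lambda>i. integral\<^sup>L M (f i)) sums integral\<^sup>L M F"
proof -
  have "(\<lambda>n. integral\<^sup>L M (\<lambda>x. \<Sum>i<n. f i x)) \<longlonglongrightarrow> integral\<^sup>L M F"
  proof (rule integral_dominated_convergence[where w=W])
    show "AE x in M. (\<lambda>n. \<Sum>i<n. f i x) \<longlonglongrightarrow> F x" using su by (simp add: sums_def)
    show "\<And>n. AE x in M. norm (\<Sum>i<n. f i x) \<le> W x" using bd by simp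
  qed (use int Fm W in auto)
  moreover have "integral\<^sup>L M (\<lambda>x. \<Sum>i<n. f i x) = (\<Sum>i<n. integral\<^sup>L M (f i))" for n
    using int by simp
  ultimately show ?thesis by (simp add: sums_def)
qed

lemma exp_series_real: "(\<lambda>n. x ^ n / fact n) sums exp (x::real)"
  using exp_converges[of x] by (simp add: divide_inverse mult.commute)

lemma pow_fact_le_exp:
  assumes "0 \<le> (x::real)" shows "x ^ k / fact k \<le> exp x"
proof -
  have "sum (\<lambda>n. x ^ n / fact n) {k} \<le> suminf (\<lambda>n. x ^ n / fact n)"
    by (rule sum_le_suminf) (use exp_series_real[of x] assms in \<open>auto simp: sums_iff\<close>)
  then show ?thesis using exp_series_real[of x] by (simp add: sums_iff)
qed

lemma pointwise_gen:
  fixes x s :: real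
  assumes "0 \<le> s" "s \<le> 1" "0 \<le> x"
  shows "(\<lambda>k. x ^ k / fact k * exp (- x) * s ^ k) sums exp (- (1 - s) * x)"
    and "\<bar>\<Sum>k<n. x ^ k / fact k * exp (- x) * s ^ k\<bar> \<le> 1"
proof -
  have "(\<lambda>k. (s*x) ^ k / fact k * exp (- x)) sums (exp (s*x) * exp (-x))"
    by (rule sums_mult2[OF exp_series_real])
  moreover have "(\<lambda>k. x ^ k / fact k * exp (- x) * s ^ k) = (\<lambda>k. (s*x) ^ k / fact k * exp (- x))"
    by (rule ext) (simp add: power_mult_distrib)
  moreover have "exp (s*x) * exp (-x) = exp (- (1 - s) * x)"
    by (simp add: exp_add[symmetric] algebra_simps)
  ultimately show su: "(\<lambda>k. x ^ k / fact k * exp (- x) * s ^ k) sums exp (- (1 - s) * x)"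
    by (simp only:)
  have nn: "0 \<le> x ^ k / fact k * exp (- x) * s ^ k" for k using assms by simp
  have "(\<Sum>k<n. x ^ k / fact k * exp (- x) * s ^ k) \<le> exp (- (1 - s) * x)"
    using sum_le_suminf[OF sums_summable[OF su], of "{..<n}"] nn su by (simp add: sums_iff)
  also have "\<dots> \<le> 1" using assms by (simp add: mult_nonpos_nonneg)
  finally show "\<bar>\<Sum>k<n. x ^ k / fact k * exp (- x) * s ^ k\<bar> \<le> 1"
    using nn by (simp add: sum_nonneg)
qed

lemma gen_facts:
  assumes mu: "0 < mu" and nn: "nonneg_rv_mean M X mu"
  defines "p \<equiv> mixed_poisson_pmf M X"
  shows "\<And>s. s \<in> {0..1} \<Longrightarrow> gen_fun p s = (\<integral>x. exp (- (1 - s) * X x) \<partial>M)"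
    and "mean_nat p = mu"
    and "\<And>s. s \<in> {0..1} \<Longrightarrow> sb_gen_fun p s = (\<integral>x. X x * exp (- (1 - s) * X x) \<partial>M) / mu"
    and "z_root p \<in> {0..1} \<and> z_root p = sb_gen_fun p (z_root p) \<and>
         (\<forall>s\<in>{0..1}. s = sb_gen_fun p s \<longrightarrow> z_root p \<le> s)"
proof -
  have ps: "prob_space M" and Xm[measurable]: "X \<in> borel_measurable M"
    and Xnn: "AE w in M. 0 \<le> X w" and Xi: "integrable M X" and Xmu: "(\<integral>w. X w \<partial>M) = mu"
    using nn unfolding nonneg_rv_mean_def by auto
  interpret prob_space M by (rule ps)
  define e where "e = (\<lambda>k w. X w ^ k / fact k * exp (- X w))"
  have em[measurable]: "e k \<in> borel_measurable M" for k unfolding e_def by measurable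
  have pe: "p k = integral\<^sup>L M (e k)" for k unfolding p_def e_def mixed_poisson_pmf_def by simp
  have ebd: "AE w in M. \<bar>e k w\<bar> \<le> 1" for k
    using Xnn
  proof eventually_elim
    case (elim w)
    have "X w ^ k / fact k * exp (- X w) \<le> exp (X w) * exp (- X w)"
      by (rule mult_right_mono[OF pow_fact_le_exp]) (use elim in auto)
    then show ?case using elim by (simp add: e_def exp_minus field_simps)
  qed
  have ei: "integrable M (e k)" for k
  proof -
    have "integrable M (\<lambda>_. 1::real)" by simp
    then show ?thesis by (rule Bochner_Integration.integrable_bound) (use ebd in auto)
  qed
  have pnn: "0 \<le> p k" for k
    unfolding pe by (rule integral_nonneg_AE) (use Xnn in \<open>auto simp: e_def\<close>)
  have G1: "(\<lambda>k. p k * s ^ k) sums (\<integral>x. exp (- (1 - s) * X x) \<partial>M)" if s: "s \<in> {0..1}" for s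
  proof -
    have "(\<lambda>k. integral\<^sup>L M (\<lambda>w. e k w * s ^ k)) sums (\<integral>x. exp (- (1 - s) * X x) \<partial>M)"
    proof (rule sums_integral_dom[where W="\<lambda>_. 1"])
      show "AE x in M. (\<lambda>i. e i x * s ^ i) sums exp (- (1 - s) * X x)"
        using Xnn by eventually_elim (use s pointwise_gen(1) in \<open>auto simp: e_def\<close>)
      show "AE x in M. \<bar>\<Sum>i<n. e i x * s ^ i\<bar> \<le> 1" for n
        using Xnn by eventually_elim (use s pointwise_gen(2) in \<open>auto simp: e_def\<close>)
    qed (use ei in auto)
    then show ?thesis by (simp add: pe)
  qed
  show "gen_fun p s = (\<integral>x. exp (- (1 - s) * X x) \<partial>M)" if "s \<in> {0..1}" for s
    unfolding gen_fun_def using G1[OF that] by (simp add: sums_iff)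
  have se: "real (Suc k) * e (Suc k) w = X w * e k w" for k w
  proof -
    have h: "(fact (Suc k)::real) = real (Suc k) * fact k" by (simp only: fact_Suc of_nat_mult)
    have "real (Suc k) * (X w ^ Suc k / (real (Suc k) * fact k) * exp (- X w)) = X w * (X w ^ k / fact k * exp (- X w))"
      by (simp only: power_Suc) (simp del: of_nat_Suc)
    then show ?thesis unfolding e_def h .
  qed
  have sei: "integrable M (\<lambda>w. X w * e k w)" for k
  proof (rule Bochner_Integration.integrable_bound[OF Xi])
    show "AE x in M. norm (X x * e k x) \<le> norm (X x)"
      using ebd[of k] Xnn by eventually_elim (auto simp: abs_mult intro!: mult_left_le)
  qed simp
  have G3: "(\<lambda>k. real (Suc k) * p (Suc k) * s ^ k) sums (\<integral>x. X x * exp (- (1 - s) * X x) \<partial>M)"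
    if s: "s \<in> {0..1}" for s
  proof -
    have "(\<lambda>k. integral\<^sup>L M (\<lambda>w. X w * e k w * s ^ k)) sums (\<integral>x. X x * exp (- (1 - s) * X x) \<partial>M)"
    proof (rule sums_integral_dom[where W="X"])
      show "AE x in M. (\<lambda>i. X x * e i x * s ^ i) sums (X x * exp (- (1 - s) * X x))"
        using Xnn
      proof eventually_elim
        case (elim x)
        have "(\<lambda>i. X x * (e i x * s ^ i)) sums (X x * exp (- (1 - s) * X x))"
          by (rule sums_mult) (use pointwise_gen(1)[of s "X x"] s elim in \<open>auto simp: e_def\<close>)
        then show ?case by (simp add: mult.assoc)
      qed
      show "AE x in M. \<bar>\<Sum>i<n. X x * e i x * s ^ i\<bar> \<le> X x" for n
        using Xnn
      proof eventually_elim
        case (elim x)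
        have "\<bar>\<Sum>i<n. X x * e i x * s ^ i\<bar> = X x * \<bar>\<Sum>i<n. e i x * s ^ i\<bar>"
          using elim by (simp add: sum_distrib_left[symmetric] abs_mult mult.assoc)
        also have "\<dots> \<le> X x * 1"
          using elim s pointwise_gen(2)[of s "X x" n] by (intro mult_left_mono) (auto simp: e_def)
        finally show ?case by simp
      qed
    qed (use sei Xi in \<open>auto intro!: integrable_mult_left\<close>)
    moreover have "integral\<^sup>L M (\<lambda>w. X w * e k w * s ^ k) = real (Suc k) * p (Suc k) * s ^ k" for k
    proof -
      have "integral\<^sup>L M (\<lambda>w. X w * e k w) = real (Suc k) * p (Suc k)"
        unfolding pe se[symmetric] by simp
      then show ?thesis by simp
    qed
    ultimately show ?thesis by (simp only:)
  qed
  have "(\<lambda>k. real (Suc k) * p (Suc k)) sums mu"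
    using G3[of 1] Xmu by simp
  then have "(\<lambda>k. real k * p k) sums mu" using sums_Suc_iff[of "\<lambda>k. real k * p k" mu] by simp
  then show mn: "mean_nat p = mu" unfolding mean_nat_def by (simp add: sums_iff)
  have G3': "(\<lambda>k. real (Suc k) * p (Suc k) / mean_nat p * s ^ k) sums ((\<integral>x. X x * exp (- (1 - s) * X x) \<partial>M) / mu)"
    if s: "s \<in> {0..1}" for s
    using sums_divide[OF G3[OF s], of mu] mn by (simp add: field_simps)
  show sbf: "sb_gen_fun p s = (\<integral>x. X x * exp (- (1 - s) * X x) \<partial>M) / mu" if "s \<in> {0..1}" for s
    unfolding sb_gen_fun_def using G3'[OF that] by (simp add: sums_iff)
  define c where "c = (\<lambda>k. real (Suc k) * p (Suc k) / mean_nat p)"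
  have cnn: "0 \<le> c k" for k unfolding c_def mn using pnn mu by simp
  have csum: "summable c" using G3'[of 1] unfolding c_def by (auto simp: sums_iff)
  have cont: "continuous_on {0..1} (sb_gen_fun p)"
  proof -
    have ul: "uniform_limit {0..1} (\<lambda>n s. \<Sum>i<n. c i * s ^ i) (\<lambda>s. suminf (\<lambda>i. c i * s ^ i)) sequentially"
    proof (rule Weierstrass_m_test[OF _ csum])
      fix n and s :: real assume "s \<in> {0..1}"
      then have "\<bar>s ^ n\<bar> \<le> 1" by (simp add: power_le_one power_abs)
      then show "norm (c n * s ^ n) \<le> c n"
        using cnn[of n] by (simp add: abs_mult mult_left_le)
    qed
    have "continuous_on {0..1} (\<lambda>s. suminf (\<lambda>i. c i * s ^ i))"
      by (rule uniform_limit_theorem[OF _ ul]) (auto intro!: always_eventually continuous_intros)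
    moreover have "(\<lambda>s. suminf (\<lambda>i. c i * s ^ i)) = sb_gen_fun p"
      by (rule ext) (simp add: sb_gen_fun_def c_def)
    ultimately show ?thesis by metis
  qed
  define S where "S = {s \<in> {0..1::real}. sb_gen_fun p s - s = 0}"
  have clS: "closed S" unfolding S_def
    by (rule continuous_closed_preimage_constant) (auto intro!: continuous_intros cont)
  have oneS: "1 \<in> S" unfolding S_def using sbf[of 1] Xmu mu by simp
  have bS: "bdd_below S" unfolding S_def by (rule bdd_belowI[of _ 0]) auto
  have IS: "Inf S \<in> S" using closed_contains_Inf[OF _ bS clS] oneS by auto
  have zr: "z_root p = Inf S"
    unfolding z_root_def
  proof (rule Least_equality)
    show "Inf S \<in> {0..1} \<and> Inf S = sb_gen_fun p (Inf S)" using IS unfolding S_def by auto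
    fix y assume "y \<in> {0..1} \<and> y = sb_gen_fun p y"
    then have "y \<in> S" unfolding S_def by auto
    then show "Inf S \<le> y" using cInf_lower[OF _ bS] by auto
  qed
  show "z_root p \<in> {0..1} \<and> z_root p = sb_gen_fun p (z_root p) \<and>
         (\<forall>s\<in>{0..1}. s = sb_gen_fun p s \<longrightarrow> z_root p \<le> s)"
    using IS cInf_lower[OF _ bS] unfolding zr S_def by auto
qed


lemma aux1: "0 \<le> (t::real) \<Longrightarrow> 0 \<le> x \<Longrightarrow> \<bar>1 - exp (- t * x)\<bar> \<le> 1"
proof -
  assume a: "0 \<le> t" "0 \<le> x"
  then have "0 \<le> t * x" by simp
  then have "exp (- (t * x)) \<le> 1" by simp
  then show ?thesis by simp
qed

lemma LB:
  fixes X :: "'a \<Rightarrow> real" and t mu :: real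
  assumes ps: "prob_space M" and Xm[measurable]: "X \<in> borel_measurable M"
    and Xnn: "AE w in M. 0 \<le> X w" and Xi: "integrable M X" and Xmu: "(\<integral>w. X w \<partial>M) = mu"
    and t0: "0 \<le> t"
    and fp: "(\<integral>x. X x * (1 - exp (- t * X x)) \<partial>M) = mu * t"
  shows "\<And>w. 1 \<le> w \<Longrightarrow> 1 + 2*w \<le> exp w \<Longrightarrow>
      w * (\<integral>x. 1 - exp (- t * X x) \<partial>M) + mu * t^2
        \<le> (1 + exp (-w) * (2*w - 1)) * mu * t + (w - w * exp (-w) - 2*w^2 * exp (-w))"
    and "(\<integral>x. 1 - exp (- t * X x) \<partial>M) \<le> 1 - exp (- t * mu)"
proof -
  interpret prob_space M by (rule ps)
  have ai: "integrable M (\<lambda>x. 1 - exp (- t * X x))"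
  proof -
    have "integrable M (\<lambda>_. 1::real)" by simp
    then show ?thesis
    proof (rule Bochner_Integration.integrable_bound)
      show "AE x in M. norm (1 - exp (- t * X x)) \<le> norm (1::real)"
        using Xnn
        by eventually_elim (use t0 aux1 in auto)
    qed simp
  qed
  have bi: "integrable M (\<lambda>x. X x * (1 - exp (- t * X x)))"
  proof (rule Bochner_Integration.integrable_bound[OF Xi])
    show "AE x in M. norm (X x * (1 - exp (- t * X x))) \<le> norm (X x)"
      using Xnn by eventually_elim (use t0 in \<open>auto simp: abs_mult mult_nonneg_nonneg intro!: mult_left_le\<close>)
  qed simp
  show "w * (\<integral>x. 1 - exp (- t * X x) \<partial>M) + mu * t^2
        \<le> (1 + exp (-w) * (2*w - 1)) * mu * t + (w - w * exp (-w) - 2*w^2 * exp (-w))"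
    if w1: "1 \<le> w" and ew: "1 + 2*w \<le> exp w" for w
  proof -
    define K where "K = 1 + exp (-w) * (2*w - 1)"
    define Mc where "Mc = w - w * exp (-w) - 2*w^2 * exp (-w)"
    have "(\<integral>x. w * (1 - exp (- t * X x)) + t * (X x * (1 - exp (- t * X x))) \<partial>M)
          \<le> (\<integral>x. K * t * X x + Mc \<partial>M)"
    proof (rule integral_mono_AE)
      show "integrable M (\<lambda>x. w * (1 - exp (- t * X x)) + t * (X x * (1 - exp (- t * X x))))"
        using ai bi by auto
      show "integrable M (\<lambda>x. K * t * X x + Mc)" using Xi by auto
      show "AE x in M. w * (1 - exp (- t * X x)) + t * (X x * (1 - exp (- t * X x))) \<le> K * t * X x + Mc"
        using Xnn
      proof eventually_elim
        case (elim x)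
        have "(1 - exp (- (t * X x))) * (w + t * X x) \<le> K * (t * X x) + Mc"
          unfolding K_def Mc_def
          by (rule tangent_ineq[OF w1 ew]) (use t0 elim in simp)
        then show ?case by (simp add: algebra_simps)
      qed
    qed
    also have "(\<integral>x. K * t * X x + Mc \<partial>M) = K * t * mu + Mc"
      using Xi Xmu prob_space by simp
    also have "(\<integral>x. w * (1 - exp (- t * X x)) + t * (X x * (1 - exp (- t * X x))) \<partial>M)
        = w * (\<integral>x. 1 - exp (- t * X x) \<partial>M) + t * (mu * t)"
      using ai bi fp by simp
    finally show ?thesis unfolding K_def Mc_def by (simp add: power2_eq_square algebra_simps)
  qed
  show "(\<integral>x. 1 - exp (- t * X x) \<partial>M) \<le> 1 - exp (- t * mu)"
  proof -
    have "(\<integral>x. 1 - exp (- t * X x) \<partial>M) \<le> (\<integral>x. 1 - exp (- t * mu) + t * exp (- t * mu) * (X x - mu) \<partial>M)"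
    proof (rule integral_mono_AE[OF ai])
      show "integrable M (\<lambda>x. 1 - exp (- t * mu) + t * exp (- t * mu) * (X x - mu))"
        using Xi by auto
      show "AE x in M. 1 - exp (- t * X x) \<le> 1 - exp (- t * mu) + t * exp (- t * mu) * (X x - mu)"
      proof (rule AE_I2)
        fix x
        have "exp (- t * X x) = exp (- t * mu) * exp (t * mu - t * X x)"
          by (simp add: exp_add[symmetric])
        also have "\<dots> \<ge> exp (- t * mu) * (1 + (t * mu - t * X x))"
          by (rule mult_left_mono) auto
        finally show "1 - exp (- t * X x) \<le> 1 - exp (- t * mu) + t * exp (- t * mu) * (X x - mu)"
          by (simp add: algebra_simps)
      qed
    qed
    also have "\<dots> = 1 - exp (- t * mu)"
      using Xi Xmu prob_space by (simp add: algebra_simps)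
    finally show ?thesis .
  qed
qed

lemma mu_c_facts: "2 * mu_c = exp (mu_c - 1/2)" "3/2 \<le> mu_c"
proof -
  define h where "h = (\<lambda>x::real. exp (x - 1/2) - 2 * x)"
  have h1: "h (3/2) \<le> 0" unfolding h_def using exp_le by simp
  have e12: "13/8 \<le> exp (1/2::real)"
    using exp_lower_Taylor_quadratic[of "1/2::real"] by (simp add: power2_eq_square)
  have "exp (3/2::real) = exp (1/2) * exp (1/2) * exp (1/2)"
    by (simp add: exp_add[symmetric])
  also have "\<dots> \<ge> (13/8) * (13/8) * (13/8)"
    using e12 by (intro mult_mono) auto
  finally have "4 \<le> exp (3/2::real)" by linarith
  moreover have "(2::real) - 1/2 = 3/2" by simp
  ultimately have h2: "0 \<le> h 2" unfolding h_def by simp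
  have hc: "continuous_on {3/2..2} h" unfolding h_def by (intro continuous_intros)
  obtain r where r: "3/2 \<le> r" "r \<le> 2" "h r = 0"
    using IVT'[of h "3/2" 0 2, OF h1 h2 _ hc] by auto
  have er: "exp (r - 1/2) = 2 * r" using r(3) unfolding h_def by simp
  have gt: "2 * x < exp (x - 1/2)" if "r < x" for x
  proof -
    have "exp (x - 1/2) = exp (r - 1/2) * exp (x - r)" by (simp add: exp_add[symmetric])
    also have "\<dots> \<ge> 2 * r * (1 + (x - r))" unfolding er using r by (intro mult_left_mono) auto
    moreover have "2 * (x - r) < 2 * r * (x - r)" using that r by (intro mult_strict_right_mono) auto
    ultimately show ?thesis by (simp add: algebra_simps)
  qed
  have "mu_c = r" unfolding mu_c_def
  proof (rule Greatest_equality)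
    show "2 * r = exp (r - 1/2)" using er by simp
    fix y :: real assume "2 * y = exp (y - 1/2)"
    then show "y \<le> r" using gt[of y] by (cases "r < y") auto
  qed
  then show "2 * mu_c = exp (mu_c - 1/2)" "3/2 \<le> mu_c" using er r by auto
qed


lemma int_exp:
  fixes X :: "'a \<Rightarrow> real"
  assumes "prob_space M" "X \<in> borel_measurable M" "AE w in M. 0 \<le> X w" "0 \<le> t"
  shows "integrable M (\<lambda>x. exp (- t * X x))"
proof -
  interpret prob_space M by fact
  have "integrable M (\<lambda>_. 1::real)" by simp
  then show ?thesis
  proof (rule Bochner_Integration.integrable_bound)
    show "AE x in M. norm (exp (- t * X x)) \<le> norm (1::real)"
      using assms(3) by eventually_elim (use assms(4) in \<open>auto simp: mult_nonneg_nonneg\<close>)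
  qed (use assms(2) in simp)
qed

lemma int_Xexp:
  fixes X :: "'a \<Rightarrow> real"
  assumes "prob_space M" "X \<in> borel_measurable M" "AE w in M. 0 \<le> X w" "0 \<le> t" "integrable M X"
  shows "integrable M (\<lambda>x. X x * exp (- t * X x))"
proof (rule Bochner_Integration.integrable_bound[OF assms(5)])
  show "AE x in M. norm (X x * exp (- t * X x)) \<le> norm (X x)"
    using assms(3) by eventually_elim (use assms(4) in \<open>auto simp: abs_mult mult_nonneg_nonneg intro!: mult_left_le\<close>)
qed (use assms(2) in simp)

theorem theorem3p1:
  fixes mu :: real and M :: "'a measure" and X :: "'a \<Rightarrow> real"
  assumes "0 < mu"
    and "nonneg_rv_mean M X mu"
  shows "let m = max mu mu_c; Mstar = measure_pmf (bernoulli_pmf (min 1 (mu / mu_c)));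
             Xstar = (\<lambda>b::bool. if b then m else 0)
         in nonneg_rv_mean Mstar Xstar mu \<and>
            q_val (mixed_poisson_pmf Mstar Xstar) \<le> q_val (mixed_poisson_pmf M X)"
proof -
  note mu = assms(1) and nn = assms(2)
  note mc = mu_c_facts
  define m where "m = max mu mu_c"
  define pr where "pr = min 1 (mu / mu_c)"
  define Xs where "Xs = (\<lambda>b::bool. if b then m else 0)"
  have mcpos: "0 < mu_c" using mc(2) by simp
  have pr01: "0 \<le> pr" "pr \<le> 1" unfolding pr_def using mu mcpos by auto
  have prm: "pr * m = mu"
    unfolding pr_def m_def using mu mcpos by (auto simp: min_def max_def field_simps)
  have m0: "0 < m" unfolding m_def using mu by simp
  have nns: "nonneg_rv_mean (measure_pmf (bernoulli_pmf pr)) Xs mu"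
    unfolding nonneg_rv_mean_def
  proof (intro conjI)
    show "prob_space (measure_pmf (bernoulli_pmf pr))" by (rule prob_space_measure_pmf)
    show "Xs \<in> borel_measurable (measure_pmf (bernoulli_pmf pr))" by simp
    show "AE w in measure_pmf (bernoulli_pmf pr). 0 \<le> Xs w"
      by (rule AE_I2) (use m0 in \<open>simp add: Xs_def\<close>)
    show "integrable (measure_pmf (bernoulli_pmf pr)) Xs"
      by (rule integrable_measure_pmf_finite) (rule finite_subset[of _ UNIV], auto)
    show "(\<integral>w. Xs w \<partial>measure_pmf (bernoulli_pmf pr)) = mu"
      using pr01 prm by (simp add: Xs_def mult.commute)
  qed
  have ps: "prob_space M" and Xm[measurable]: "X \<in> borel_measurable M"
    and Xnn: "AE w in M. 0 \<le> X w" and Xi: "integrable M X" and Xmu: "(\<integral>w. X w \<partial>M) = mu"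
    using nn unfolding nonneg_rv_mean_def by auto
  interpret prob_space M by (rule ps)
  define p where "p = mixed_poisson_pmf M X"
  note gf = gen_facts[OF mu nn, folded p_def]
  define z where "z = z_root p"
  have z01: "z \<in> {0..1}" and zfix: "z = sb_gen_fun p z" using gf(4) unfolding z_def by auto
  define t where "t = 1 - z"
  have t01: "0 \<le> t" "t \<le> 1" using z01 unfolding t_def by auto
  have tz: "1 - z = t" unfolding t_def by simp
  have ie: "integrable M (\<lambda>x. exp (- t * X x))" by (rule int_exp[OF ps Xm Xnn t01(1)])
  have ixe: "integrable M (\<lambda>x. X x * exp (- t * X x))" by (rule int_Xexp[OF ps Xm Xnn t01(1) Xi])
  have q: "q_val p = (\<integral>x. exp (- t * X x) \<partial>M)"
    unfolding q_val_def z_def[symmetric] using gf(1)[OF z01] unfolding tz by simp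
  have zeq: "z * mu = (\<integral>x. X x * exp (- t * X x) \<partial>M)"
    using zfix gf(3)[OF z01] mu unfolding tz by (simp add: field_simps)
  have fp: "(\<integral>x. X x * (1 - exp (- t * X x)) \<partial>M) = mu * t"
  proof -
    have "(\<integral>x. X x * (1 - exp (- t * X x)) \<partial>M) = (\<integral>x. X x - X x * exp (- t * X x) \<partial>M)"
      by (simp add: algebra_simps)
    also have "\<dots> = mu - z * mu" using Xi ixe Xmu zeq by simp
    finally show ?thesis unfolding t_def by (simp add: algebra_simps)
  qed
  define a where "a = (\<integral>x. 1 - exp (- t * X x) \<partial>M)"
  have qa: "q_val p = 1 - a" unfolding q a_def using ie prob_space by simp
  note lb = LB[OF ps Xm Xnn Xi Xmu t01(1) fp, folded a_def]
  define ps' where "ps' = mixed_poisson_pmf (measure_pmf (bernoulli_pmf pr)) Xs"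
  note gs = gen_facts[OF mu nns, folded ps'_def]
  have gstar: "gen_fun ps' s = exp (- (1 - s) * m) * pr + (1 - pr)" if "s \<in> {0..1}" for s
    using gs(1)[OF that] pr01 by (simp add: Xs_def)
  have sbstar: "sb_gen_fun ps' s = exp (- (1 - s) * m)" if "s \<in> {0..1}" for s
  proof -
    have "mu * sb_gen_fun ps' s = m * (pr * exp (m * s - m))"
      using gs(3)[OF that] pr01 prm mu by (simp add: Xs_def field_simps)
    also have "\<dots> = mu * exp (- (1 - s) * m)" using prm by (simp add: algebra_simps)
    finally show ?thesis using mu by simp
  qed
  define zs where "zs = z_root ps'"
  have zs: "zs \<in> {0..1}" "\<And>s. s \<in> {0..1} \<Longrightarrow> s = exp (- (1 - s) * m) \<Longrightarrow> zs \<le> s"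
    using gs(4) sbstar unfolding zs_def by auto
  have qstar: "q_val ps' \<le> zst * pr + (1 - pr)"
    if zst: "zst \<in> {0..1}" "zst = exp (- (1 - zst) * m)" for zst
  proof -
    have "q_val ps' = exp (- (1 - zs) * m) * pr + (1 - pr)"
      unfolding q_val_def zs_def[symmetric] using gstar[OF zs(1)] .
    also have "\<dots> \<le> exp (- (1 - zst) * m) * pr + (1 - pr)"
      using zs(2)[OF zst] m0 pr01 by (intro add_right_mono mult_right_mono) auto
    finally show ?thesis using zst by simp
  qed
  have main: "q_val ps' \<le> q_val p"
  proof (cases "mu < mu_c")
    case True
    have mm: "m = mu_c" unfolding m_def using True by simp
    have prv: "pr = mu / mu_c" unfolding pr_def using True mcpos by simp
    define w where "w = mu_c - 1/2"
    have w1: "1 \<le> w" using mc(2) unfolding w_def by simp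
    have ew: "exp w = 2 * mu_c" unfolding w_def using mc(1) by (rule sym)
    have emw: "exp (- w) = 1 / (2 * mu_c)" unfolding exp_minus ew inverse_eq_divide ..
    define zst where "zst = 1 / (2 * mu_c)"
    have zst: "zst \<in> {0..1}" "zst = exp (- (1 - zst) * m)"
    proof -
      show "zst \<in> {0..1}" unfolding zst_def using mc(2) by simp
      have "(1 - zst) * m = w" unfolding zst_def mm w_def using mcpos by (simp add: field_simps)
      then have "exp (- (1 - zst) * m) = exp (- w)" by (metis minus_mult_left)
      then show "zst = exp (- (1 - zst) * m)" unfolding emw zst_def by simp
    qed
    define K where "K = 2 - 1/mu_c"
    define E where "E = exp (- w)"
    have E: "E = 1 / (2 * mu_c)" unfolding E_def by (rule emw)
    have w2: "1 + 2 * w = 2 * mu_c" unfolding w_def by simp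
    have K1: "1 + E * (2*w - 1) = K"
    proof -
      have "2*w - 1 = 2 * mu_c - 2" unfolding w_def by simp
      then have "E * (2*w - 1) = (2 * mu_c - 2) / (2 * mu_c)" unfolding E by simp
      also have "\<dots> = 1 - 1 / mu_c" using mcpos by (simp add: field_simps)
      finally show ?thesis unfolding K_def by simp
    qed
    have M0: "w - w * E - 2*w^2 * E = 0"
    proof -
      have "w - w * E - 2*w^2 * E = w * (1 - (1 + 2 * w) * E)" by (simp add: algebra_simps power2_eq_square)
      also have "(1 + 2 * w) * E = 1" unfolding w2 E using mcpos by simp
      finally show ?thesis by simp
    qed
    have L: "w * a + mu * t^2 \<le> K * mu * t"
      using lb(1)[OF w1] ew w_def K1 M0 unfolding E_def by simp
    have sq: "t * (K - t) \<le> K^2 / 4"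
    proof -
      have "0 \<le> (t - K/2)^2" by simp
      also have "(t - K/2)^2 = K^2/4 - t * (K - t)" by (simp add: power2_eq_square algebra_simps)
      finally show ?thesis by simp
    qed
    then have "mu * (t * (K - t)) \<le> mu * (K^2 / 4)"
      using mu by (intro mult_left_mono) auto
    moreover have "mu * (t * (K - t)) = K * mu * t - mu * t^2" by (simp add: algebra_simps power2_eq_square)
    ultimately have wa: "w * a \<le> mu * (K^2 / 4)" using L by simp
    have Kc: "K = (2 * mu_c - 1) / mu_c" unfolding K_def using mcpos by (simp add: field_simps)
    have "w * (pr * (1 - zst)) = ((2 * mu_c - 1) / 2) * (mu / mu_c) * ((2 * mu_c - 1) / (2 * mu_c))"
    proof -
      have A: "1 - zst = (2 * mu_c - 1) / (2 * mu_c)" unfolding zst_def using mcpos by (simp add: field_simps)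
      have B: "w = (2 * mu_c - 1) / 2" unfolding w_def by simp
      show ?thesis by (simp only: prv A B mult.assoc)
    qed
    also have "\<dots> = mu * (K^2 / 4)" unfolding Kc using mcpos by (simp add: field_simps power2_eq_square)
    finally have "w * a \<le> w * (pr * (1 - zst))" using wa by simp
    then have "a \<le> pr * (1 - zst)" using w1 by simp
    then show ?thesis using qstar[OF zst] qa by (simp add: algebra_simps)
  next
    case False
    have mm: "m = mu" unfolding m_def using False by simp
    have prv: "pr = 1" unfolding pr_def using False mcpos by simp
    define wc where "wc = mu_c - 1/2"
    have ewc: "exp wc = 2 * mu_c" unfolding wc_def using mc(1) by (rule sym)
    have emwc: "exp (- wc) = 1 / (2 * mu_c)" unfolding exp_minus ewc inverse_eq_divide ..
    define phi where "phi = (\<lambda>w. w - mu * (1 - exp (- w)))"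
    have p1: "phi wc \<le> 0"
    proof -
      have "phi wc = wc - mu * (1 - 1 / (2 * mu_c))" unfolding phi_def emwc ..
      also have "\<dots> = (mu_c - mu) * (1 - 1 / (2 * mu_c))"
        unfolding wc_def using mcpos by (simp add: field_simps)
      also have "\<dots> \<le> 0" using False mc(2) by (intro mult_nonpos_nonneg) auto
      finally show ?thesis .
    qed
    have p2: "0 \<le> phi mu" unfolding phi_def using mu by simp
    have wcmu: "wc \<le> mu" unfolding wc_def using False by simp
    have pc: "continuous_on {wc..mu} phi" unfolding phi_def by (intro continuous_intros)
    obtain w where w: "wc \<le> w" "w \<le> mu" "phi w = 0"
      using IVT'[of phi wc 0 mu, OF p1 p2 wcmu pc] by auto
    have wfix: "w = mu * (1 - exp (- w))" using w(3) unfolding phi_def by simp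
    have w1: "1 \<le> w" using w(1) mc(2) unfolding wc_def by simp
    have ew: "1 + 2 * w \<le> exp w"
    proof -
      have "exp w = exp wc * exp (w - wc)" by (simp add: exp_add[symmetric])
      also have "\<dots> \<ge> 2 * mu_c * (1 + (w - wc))" unfolding ewc using mcpos by (intro mult_left_mono) auto
      finally have "2 * mu_c * (1 + (w - wc)) \<le> exp w" .
      moreover have "2 * (w - wc) \<le> 2 * mu_c * (w - wc)" using w(1) mc(2) by (intro mult_right_mono) auto
      ultimately show ?thesis unfolding wc_def by (simp add: algebra_simps)
    qed
    define E where "E = exp (- w)"
    have E0: "0 < E" unfolding E_def by simp
    have Eew: "E * exp w = 1" unfolding E_def by (simp add: exp_minus)
    have E2: "E + 2 * w * E \<le> 1"
    proof -
      have "E * (1 + 2 * w) \<le> E * exp w" using ew E0 by (intro mult_left_mono) auto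
      then show ?thesis using Eew by (simp add: algebra_simps)
    qed
    define zst where "zst = E"
    have zst: "zst \<in> {0..1}" "zst = exp (- (1 - zst) * m)"
    proof -
      show "zst \<in> {0..1}" unfolding zst_def E_def using w1 by simp
      have "(1 - zst) * m = w" unfolding zst_def mm E_def using wfix by (simp add: algebra_simps)
      then have "exp (- (1 - zst) * m) = exp (- w)" by (metis minus_mult_left)
      then show "zst = exp (- (1 - zst) * m)" unfolding zst_def E_def by simp
    qed
    have muE: "mu * (1 - E) = w" using wfix unfolding E_def by simp
    have goal: "a \<le> 1 - E"
    proof (cases "t \<le> 1 - E")
      case True
      have "t * mu \<le> (1 - E) * mu" using True mu by (intro mult_right_mono) auto
      then have "t * mu \<le> w" using muE by (simp add: algebra_simps)
      then have ex: "exp (- w) \<le> exp (- t * mu)" by simp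
      show ?thesis using ex lb(2) unfolding E_def by linarith
    next
      case False
      have L: "w * a + mu * t^2 \<le> (1 + E * (2*w - 1)) * mu * t + (w - w * E - 2*w^2 * E)"
        using lb(1)[OF w1 ew] unfolding E_def by simp
      have K: "1 + E * (2*w - 1) \<le> 2 * (1 - E)" using E2 by (simp add: algebra_simps)
      have tt: "0 \<le> t - (1 - E)" "0 \<le> t + (1 - E) - (1 + E * (2*w - 1))"
        using False K by auto
      have "0 \<le> mu * ((t - (1 - E)) * (t + (1 - E) - (1 + E * (2*w - 1))))"
        using mu tt by (intro mult_nonneg_nonneg) auto
      then have "(1 + E * (2*w - 1)) * mu * t + (w - w * E - 2*w^2 * E) - mu * t^2
          \<le> (1 + E * (2*w - 1)) * mu * (1 - E) + (w - w * E - 2*w^2 * E) - mu * (1 - E)^2"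
        by (simp add: algebra_simps power2_eq_square)
      also have "\<dots> = w * (1 - E)"
      proof -
        have r1: "(1 + E * (2*w - 1)) * mu * (1 - E) = (1 + E * (2*w - 1)) * w"
          using muE by (simp add: mult.assoc)
        have r2: "mu * (1 - E)^2 = w * (1 - E)"
          using muE by (simp add: power2_eq_square mult.assoc[symmetric])
        show ?thesis unfolding r1 r2 by (simp add: algebra_simps power2_eq_square)
      qed
      finally have "w * a \<le> w * (1 - E)" using L by simp
      then show ?thesis using w1 by simp
    qed
    then show ?thesis using qstar[OF zst] qa prv unfolding zst_def by (simp add: algebra_simps)
  qed
  show ?thesis
    unfolding Let_def using nns main
    unfolding m_def[symmetric] pr_def[symmetric] Xs_def[symmetric] ps'_def p_def by simp
qed

end
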